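(* Let $G\subset\mathbb{K}[\mathbf{x}][\boldsymbol{\partial}]$ be a finite set and let $f\in\mathbb{K}[[x_1,\dots,x_n]]$ be a nonzero formal power series solution of $G$ (i.e. $P(f)=0$ for all $P\in G$) with initial exponent $\mathbf{w}$. Then $\mathbf{w}$ is a root of $\mathrm{ind}(P)$ for each $P\in G$.
   Context: $\mathbb{K}$ is a field of characteristic zero; $\mathbb{K}[\mathbf{x}][\boldsymbol{\partial}]$ is the ring of partial differential operators in $\partial_1,\dots,\partial_n$ with coefficients in $\mathbb{K}[x_1,\dots,x_n]$ ($\partial_i f=f\partial_i+\partial f/\partial x_i$), acting naturally on $\mathbb{K}[[\mathbf{x}]]$. $\prec$ is a fixed graded term order on $\mathbb{N}^n$, applied to monomials $\mathbf{x}^{\mathbf{u}}$; the initial exponent of nonzero $f$ is the $\prec$-smallest exponent occurring in $f$. Indicial polynomial: let $\delta_i=x_i\partial_i$. For nonzero $P=\sum_{|\mathbf{u}|\le m}c_{\mathbf{u}}\boldsymbol{\partial}^{\mathbf{u}}$ of order $m$ (some $c_{\mathbf{u}}\ne0$ with $|\mathbf{u}|=m$), with $\mathbf{m}=(m,\dots,m)$ write uniquely $\mathbf{x}^{\mathbf{m}}P=\sum_{\mathbf{v}\in T}\mathbf{x}^{\mathbf{v}}\big(\sum_{|\mathbf{u}|\le m}c_{\mathbf{u},\mathbf{v}}\boldsymbol{\delta}^{\mathbf{u}}\big)$ with $c_{\mathbf{u},\mathbf{v}}\in\mathbb{K}$ and nonzero inner sums; with $\mathbf{v}_0$ the $\prec$-minimal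 element of $T$, $\mathrm{ind}(P)=\sum_{|\mathbf{u}|\le m}c_{\mathbf{u},\mathbf{v}_0}\mathbf{y}^{\mathbf{u}}\in\mathbb{K}[y_1,\dots,y_n]$; $\mathrm{ind}(0)=0$. *)

theory Defs
  imports Main "HOL-Library.Function_Algebras" "HOL-Combinatorics.Stirling"
begin

text \<open>Exponent vectors in N^n are functions 'n => nat for a finite index type 'n
  (n = CARD('n)).  A formal power series in K[[x]] is its coefficient function
  ('n => nat) => 'k.\<close>

type_synonym 'n expo = "'n \<Rightarrow> nat"

definition total_deg :: "('n::finite) expo \<Rightarrow> nat" where
  "total_deg u = (\<Sum>i\<in>UNIV. u i)"

definition graded_term_order :: "(('n::finite) expo \<Rightarrow> 'n expo \<Rightarrow> bool) \<Rightarrow> bool" where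
  "graded_term_order prec \<longleftrightarrow>
     (\<forall>u. \<not> prec u u) \<and>
     (\<forall>u v w. prec u v \<longrightarrow> prec v w \<longrightarrow> prec u w) \<and>
     (\<forall>u v. u \<noteq> v \<longrightarrow> prec u v \<or> prec v u) \<and>
     (\<forall>u v w. prec u v \<longrightarrow> prec (u + w) (v + w)) \<and>
     (\<forall>u. u \<noteq> 0 \<longrightarrow> prec 0 u) \<and>
     (\<forall>u v. total_deg u < total_deg v \<longrightarrow> prec u v)"

definition init_exp :: "(('n::finite) expo \<Rightarrow> 'n expo \<Rightarrow> bool) \<Rightarrow> ('n expo \<Rightarrow> 'k::zero) \<Rightarrow> 'n expo" where
  "init_exp prec f = (THE w. f w \<noteq> 0 \<and> (\<forall>v. f v \<noteq> 0 \<longrightarrow> v \<noteq> w \<longrightarrow> prec w v))"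

text \<open>A differential operator in K[x][d] in normal form  sum c_(v,u) x^v d^u
  (coefficients to the left), given by its finitely supported coefficient map
  (v,u) |-> c_(v,u).\<close>
type_synonym ('n,'k) diffop = "'n expo \<times> 'n expo \<Rightarrow> 'k"

definition op_supp :: "('n,'k::zero) diffop \<Rightarrow> ('n expo \<times> 'n expo) set" where
  "op_supp P = {vu. P vu \<noteq> 0}"

definition is_diffop :: "('n,'k::zero) diffop \<Rightarrow> bool" where
  "is_diffop P \<longleftrightarrow> finite (op_supp P)"

text \<open>Coefficient at exponent a of d^u applied to f (natural action on K[[x]]).\<close>
definition deriv_coeff :: "('n::finite) expo \<Rightarrow> ('n expo \<Rightarrow> 'k::field_char_0) \<Rightarrow> 'n expo \<Rightarrow> 'k" where
  "deriv_coeff u f b = f (b + u) * (\<Prod>i\<in>UNIV. of_nat (fact (b i + u i) div fact (b i)))"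

definition apply_op :: "('n::finite,'k::field_char_0) diffop \<Rightarrow> ('n expo \<Rightarrow> 'k) \<Rightarrow> 'n expo \<Rightarrow> 'k" where
  "apply_op P f a = (\<Sum>(v,u)\<in>op_supp P. P (v,u) * (if v \<le> a then deriv_coeff u f (a - v) else 0))"

definition op_order :: "('n::finite,'k::zero) diffop \<Rightarrow> nat" where
  "op_order P = Max (total_deg ` snd ` op_supp P)"

text \<open>Signed Stirling numbers of the first kind: the falling factorial
  y(y-1)...(y-k+1) equals sum_j s1 k j * y^j.\<close>
definition s1 :: "nat \<Rightarrow> nat \<Rightarrow> int" where
  "s1 k j = (-1) ^ (k - j) * int (stirling k j)"

text \<open>Writing x^m P = sum_s x^s (sum_a c_(a,s) delta^a), using
  x^m x^v d^u = x^(m+v-u) (x^u d^u) and x_i^k d_i^k = delta_i(delta_i - 1)...(delta_i - k + 1):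
  the coefficient c_(a,s) of x^s delta^a.\<close>
definition delta_coeff :: "('n::finite,'k::field_char_0) diffop \<Rightarrow> 'n expo \<Rightarrow> 'n expo \<Rightarrow> 'k" where
  "delta_coeff P s a =
     (\<Sum>(v,u)\<in>op_supp P.
        if (\<lambda>_. op_order P) + v - u = s
        then P (v,u) * (\<Prod>i\<in>UNIV. of_int (s1 (u i) (a i))) else 0)"

definition shift_set :: "('n::finite,'k::field_char_0) diffop \<Rightarrow> 'n expo set" where
  "shift_set P = {s. \<exists>a. delta_coeff P s a \<noteq> 0}"

text \<open>Indicial polynomial ind(P) in K[y_1..y_n], as coefficient map a |-> coeff of y^a
  (ind(0) = 0).\<close>
definition indicial :: "(('n::finite) expo \<Rightarrow> 'n expo \<Rightarrow> bool) \<Rightarrow> ('n,'k::field_char_0) diffop \<Rightarrow> 'n expo \<Rightarrow> 'k" where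
  "indicial prec P =
     (if op_supp P = {} then (\<lambda>_. 0)
      else delta_coeff P (THE s0. s0 \<in> shift_set P \<and> (\<forall>s\<in>shift_set P. s \<noteq> s0 \<longrightarrow> prec s0 s)))"

definition mpoly_eval :: "(('n::finite) expo \<Rightarrow> 'k::comm_ring_1) \<Rightarrow> ('n \<Rightarrow> 'k) \<Rightarrow> 'k" where
  "mpoly_eval p y = (\<Sum>a\<in>{a. p a \<noteq> 0}. p a * (\<Prod>i\<in>UNIV. y i ^ a i))"

end

theory Submission imports Defs "HOL-Library.FuncSet" begin


definition fall :: "nat \<Rightarrow> nat \<Rightarrow> 'a::comm_ring_1" where
  "fall y k = pochhammer (of_nat y - of_nat k + 1) k"

lemma s1_sum:
  "(\<Sum>j\<le>k. of_int (s1 k j) * (y::'a::comm_ring_1)^j) = pochhammer (y - of_nat k + 1) k"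
proof -
  have "pochhammer (y - of_nat k + 1) k = (-1)^k * pochhammer (-y) k"
    by (simp add: pochhammer_minus)
  also have "pochhammer (-y) k = (\<Sum>j\<le>k. of_nat (stirling k j) * (-y) ^ j)"
    by (simp add: stirling_pochhammer)
  also have "(-1)^k * \<dots> = (\<Sum>j\<le>k. of_int (s1 k j) * y^j)"
    unfolding sum_distrib_left
  proof (rule sum.cong)
    fix j assume "j \<in> {..k}"
    then have jk: "j \<le> k" by simp
    have A1: "(-1::'a)^k = (-1)^(k-j) * (-1)^j"
      by (subst power_add[symmetric]) (simp add: jk)
    have A2: "(-y)^j = (-1)^j * y^j" by (rule power_minus)
    have A3: "((-1::'a)^j) * (-1)^j = 1" by (simp add: power_mult_distrib[symmetric])
    have "(-1)^k * (of_nat (stirling k j) * (-y)^j) =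
        (-1)^(k-j) * ((-1)^j * (-1)^j) * (of_nat (stirling k j) * y^j)"
      unfolding A1 A2 by (simp only: mult_ac)
    also have "\<dots> = of_int (s1 k j) * y^j"
      unfolding A3 by (simp add: s1_def)
    finally show "(-1)^k * (of_nat (stirling k j) * (-y)^j) = of_int (s1 k j) * y^j" .
  qed simp
  finally show ?thesis by simp
qed

lemma fall_fact: "of_nat (fact (b+u) div fact b) = (fall (b+u) u :: 'a::comm_ring_1)"
proof -
  have "(fact (b+u)::nat) = fact b * pochhammer (b+1) u"
    by (simp add: pochhammer_fact pochhammer_product' add.commute)
  then have "fact (b+u) div fact b = pochhammer (b+1) u" by simp
  moreover have "(of_nat (b+u) - of_nat u + 1 :: 'a) = of_nat (b+1)" by simp
  moreover have "of_nat (pochhammer (b+1) u) = pochhammer (of_nat (b+1) :: 'a) u"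
    by (simp only: pochhammer_of_nat)
  ultimately show ?thesis by (simp add: fall_def add.commute)
qed

lemma fall_zero: "y < k \<Longrightarrow> (fall y k :: 'a::field_char_0) = 0"
  unfolding fall_def pochhammer_eq_0_iff
  by (rule exI[of _ "k - 1 - y"]) (simp add: of_nat_diff algebra_simps)

lemma s1_zero: "k < j \<Longrightarrow> s1 k j = 0"
  by (simp add: s1_def)

lemma u_bound:
  assumes "is_diffop P" "(v,u) \<in> op_supp P"
  shows "u i \<le> op_order P"
proof -
  have "u i \<le> total_deg u" unfolding total_deg_def
    by (rule member_le_sum) auto
  also have "total_deg u \<le> op_order P" unfolding op_order_def
    using assms unfolding is_diffop_def by (intro Max_ge) (auto simp: image_iff intro!: bexI[of _ "(v,u)"])
  finally show ?thesis .
qed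

lemma eval_delta:
  fixes P :: "('n::finite,'k::field_char_0) diffop"
  assumes "is_diffop P"
  shows "mpoly_eval (delta_coeff P s) (\<lambda>i. of_nat (y i)) =
    (\<Sum>(v,u)\<in>op_supp P. if (\<lambda>_. op_order P) + v - u = s
        then P (v,u) * (\<Prod>i\<in>UNIV. fall (y i) (u i)) else 0)"
proof -
  define K where "K = op_order P"
  define B where "B = PiE (UNIV::'n set) (\<lambda>_. {..K})"
  have finS: "finite (op_supp P)" using assms by (simp add: is_diffop_def)
  have finB: "finite B" unfolding B_def by (intro finite_PiE) auto
  have sub: "{a. delta_coeff P s a \<noteq> 0} \<subseteq> B"
  proof
    fix a assume "a \<in> {a. delta_coeff P s a \<noteq> 0}"
    then have "delta_coeff P s a \<noteq> 0" by simp
    then obtain vu where vu: "vu \<in> op_supp P" and nz: "(case vu of (v,u) \<Rightarrow>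
        if (\<lambda>_. op_order P) + v - u = s
        then P (v,u) * (\<Prod>i\<in>UNIV. of_int (s1 (u i) (a i)) :: 'k) else 0) \<noteq> 0"
      unfolding delta_coeff_def by (meson sum.not_neutral_contains_not_neutral)
    obtain v u where vu_eq: "vu = (v,u)" by (cases vu)
    have "\<forall>i. a i \<le> u i"
    proof
      fix i
      from nz have "(\<Prod>i\<in>UNIV. of_int (s1 (u i) (a i)) :: 'k) \<noteq> 0"
        by (auto simp: vu_eq split: if_splits)
      then have "s1 (u i) (a i) \<noteq> 0" by (auto simp: prod_zero_iff)
      then show "a i \<le> u i" using s1_zero by (meson not_le)
    qed
    moreover have "\<forall>i. u i \<le> K" using u_bound[OF assms] vu vu_eq K_def by blast
    ultimately show "a \<in> B" unfolding B_def by (auto simp: PiE_iff intro: le_trans)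
  qed
  have "mpoly_eval (delta_coeff P s) (\<lambda>i. of_nat (y i)) =
      (\<Sum>a\<in>B. delta_coeff P s a * (\<Prod>i\<in>UNIV. (of_nat (y i) :: 'k) ^ a i))"
    unfolding mpoly_eval_def using sub finB by (intro sum.mono_neutral_left) auto
  also have "\<dots> = (\<Sum>a\<in>B. \<Sum>vu\<in>op_supp P. (case vu of (v,u) \<Rightarrow>
        if (\<lambda>_. op_order P) + v - u = s
        then P (v,u) * (\<Prod>i\<in>UNIV. of_int (s1 (u i) (a i)) * (of_nat (y i) :: 'k) ^ a i) else 0))"
    unfolding delta_coeff_def sum_distrib_right
    by (intro sum.cong refl) (auto simp: prod.distrib)
  also have "\<dots> = (\<Sum>vu\<in>op_supp P. \<Sum>a\<in>B. (case vu of (v,u) \<Rightarrow>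
        if (\<lambda>_. op_order P) + v - u = s
        then P (v,u) * (\<Prod>i\<in>UNIV. of_int (s1 (u i) (a i)) * (of_nat (y i) :: 'k) ^ a i) else 0))"
    by (rule sum.swap)
  also have "\<dots> = (\<Sum>(v,u)\<in>op_supp P. if (\<lambda>_. op_order P) + v - u = s
        then P (v,u) * (\<Prod>i\<in>UNIV. fall (y i) (u i)) else 0)"
  proof (intro sum.cong refl)
    fix vu assume vu: "vu \<in> op_supp P"
    obtain v u where vu_eq: "vu = (v,u)" by (cases vu)
    have "(\<Sum>a\<in>B. \<Prod>i\<in>UNIV. of_int (s1 (u i) (a i)) * (of_nat (y i) :: 'k) ^ a i)
        = (\<Prod>i\<in>UNIV. \<Sum>j\<in>{..K}. of_int (s1 (u i) j) * (of_nat (y i) :: 'k) ^ j)"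
      unfolding B_def by (rule prod_sum_PiE[symmetric]) auto
    also have "\<dots> = (\<Prod>i\<in>UNIV. fall (y i) (u i))"
    proof (intro prod.cong refl)
      fix i
      have "u i \<le> K" using u_bound[OF assms] vu vu_eq K_def by blast
      then have "(\<Sum>j\<in>{..K}. of_int (s1 (u i) j) * (of_nat (y i) :: 'k) ^ j)
          = (\<Sum>j\<in>{..u i}. of_int (s1 (u i) j) * (of_nat (y i) :: 'k) ^ j)"
        by (intro sum.mono_neutral_right) (auto simp: s1_zero)
      also have "\<dots> = fall (y i) (u i)" by (simp add: s1_sum fall_def)
      finally show "(\<Sum>j\<in>{..K}. of_int (s1 (u i) j) * (of_nat (y i) :: 'k) ^ j) = fall (y i) (u i)" .
    qed
    finally have eq: "(\<Sum>a\<in>B. \<Prod>i\<in>UNIV. of_int (s1 (u i) (a i)) * (of_nat (y i) :: 'k) ^ a i)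
        = (\<Prod>i\<in>UNIV. fall (y i) (u i))" .
    show "(\<Sum>a\<in>B. (case vu of (v,u) \<Rightarrow>
        if (\<lambda>_. op_order P) + v - u = s
        then P (v,u) * (\<Prod>i\<in>UNIV. of_int (s1 (u i) (a i)) * (of_nat (y i) :: 'k) ^ a i) else 0))
      = (case vu of (v,u) \<Rightarrow> if (\<lambda>_. op_order P) + v - u = s
        then P (v,u) * (\<Prod>i\<in>UNIV. fall (y i) (u i)) else 0)"
      using eq by (simp add: vu_eq sum_distrib_left[symmetric])
  qed
  finally show ?thesis .
qed

lemma gto_min:
  assumes "graded_term_order prec" "finite X" "X \<noteq> {}"
  shows "\<exists>x\<in>X. \<forall>y\<in>X. y \<noteq> x \<longrightarrow> prec x y"
  using assms(2,3)
proof (induction X rule: finite_ne_induct)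
  case (singleton x) then show ?case by auto
next
  case (insert x F)
  then obtain m where m: "m \<in> F" "\<forall>y\<in>F. y \<noteq> m \<longrightarrow> prec m y" by blast
  have tr: "\<And>a b c. prec a b \<Longrightarrow> prec b c \<Longrightarrow> prec a c"
    and tot: "\<And>a b. a \<noteq> b \<Longrightarrow> prec a b \<or> prec b a"
    using assms(1) unfolding graded_term_order_def by blast+
  show ?case
  proof (cases "prec x m")
    case True
    then show ?thesis using m tr by (intro bexI[of _ x]) auto
  next
    case False
    then have "prec m x" using tot m insert by metis
    then show ?thesis using m by (intro bexI[of _ m]) auto
  qed
qed

lemma gto_the_min:
  assumes "graded_term_order prec" "\<exists>x\<in>X. \<forall>y\<in>X. y \<noteq> x \<longrightarrow> prec x y"
  defines "t \<equiv> THE x. x \<in> X \<and> (\<forall>y\<in>X. y \<noteq> x \<longrightarrow> prec x y)"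
  shows "t \<in> X \<and> (\<forall>y\<in>X. y \<noteq> t \<longrightarrow> prec t y)"
proof -
  have irr: "\<And>a. \<not> prec a a" and tr: "\<And>a b c. prec a b \<Longrightarrow> prec b c \<Longrightarrow> prec a c"
    using assms(1) unfolding graded_term_order_def by blast+
  have "\<exists>!x. x \<in> X \<and> (\<forall>y\<in>X. y \<noteq> x \<longrightarrow> prec x y)"
    using assms(2) irr tr by metis
  then show ?thesis unfolding t_def by (rule theI')
qed

lemma init_exp_props:
  fixes f :: "('n::finite) expo \<Rightarrow> 'k::zero"
  assumes gto: "graded_term_order prec" and nz: "f \<noteq> (\<lambda>_. 0)"
  shows "f (init_exp prec f) \<noteq> 0 \<and>
    (\<forall>v. f v \<noteq> 0 \<longrightarrow> v \<noteq> init_exp prec f \<longrightarrow> prec (init_exp prec f) v)"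
proof -
  define S where "S = {v. f v \<noteq> 0}"
  from nz obtain v0 where v0: "v0 \<in> S" unfolding S_def by auto
  define d where "d = (LEAST d. \<exists>v\<in>S. total_deg v = d)"
  have dex: "\<exists>v\<in>S. total_deg v = d" unfolding d_def
    by (rule LeastI[of _ "total_deg v0"]) (use v0 in auto)
  have dmin: "\<And>v. v \<in> S \<Longrightarrow> d \<le> total_deg v" unfolding d_def
    by (rule Least_le) auto
  define X where "X = {v\<in>S. total_deg v = d}"
  have "X \<subseteq> PiE UNIV (\<lambda>_. {..d})"
  proof
    fix v assume "v \<in> X"
    then have "total_deg v = d" by (simp add: X_def)
    moreover have "\<And>i. v i \<le> total_deg v" unfolding total_deg_def
      by (rule member_le_sum) auto
    ultimately show "v \<in> PiE UNIV (\<lambda>_. {..d})" by auto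
  qed
  then have finX: "finite X" by (rule finite_subset) (intro finite_PiE, auto)
  have "X \<noteq> {}" using dex X_def by auto
  then obtain x where x: "x \<in> X" "\<forall>y\<in>X. y \<noteq> x \<longrightarrow> prec x y"
    using gto_min[OF gto finX] by blast
  have gr: "\<And>a b. total_deg a < total_deg b \<Longrightarrow> prec a b"
    using gto unfolding graded_term_order_def by blast
  have "\<forall>y\<in>S. y \<noteq> x \<longrightarrow> prec x y"
  proof (intro ballI impI)
    fix y assume y: "y \<in> S" "y \<noteq> x"
    show "prec x y"
    proof (cases "total_deg y = d")
      case True then show ?thesis using x y X_def by auto
    next
      case False then have "total_deg x < total_deg y" using dmin[OF y(1)] x X_def by auto
      then show ?thesis by (rule gr)
    qed
  qed
  with x have "\<exists>x\<in>S. \<forall>y\<in>S. y \<noteq> x \<longrightarrow> prec x y" unfolding X_def by blast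
  from gto_the_min[OF gto this] show ?thesis
    unfolding init_exp_def S_def by simp
qed

lemma main_one:
  fixes prec :: "('n::finite) expo \<Rightarrow> 'n expo \<Rightarrow> bool"
    and P :: "('n, 'k::field_char_0) diffop"
    and f :: "'n expo \<Rightarrow> 'k"
  assumes gto: "graded_term_order prec"
    and dP: "is_diffop P"
    and nz: "f \<noteq> (\<lambda>_. 0)"
    and sol: "apply_op P f = (\<lambda>_. 0)"
  shows "mpoly_eval (indicial prec P) (\<lambda>i. of_nat (init_exp prec f i)) = 0"
proof -
  have irr: "\<And>a. \<not> prec a a" and tr: "\<And>a b c. prec a b \<Longrightarrow> prec b c \<Longrightarrow> prec a c"
    and mono: "\<And>a b c. prec a b \<Longrightarrow> prec (a + c) (b + c)"
    using gto unfolding graded_term_order_def by blast+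
  define w where "w = init_exp prec f"
  have fw: "f w \<noteq> 0" and wmin: "\<And>v. f v \<noteq> 0 \<Longrightarrow> v \<noteq> w \<Longrightarrow> prec w v"
    using init_exp_props[OF gto nz] unfolding w_def by auto
  define m where "m = op_order P"
  define sh where "sh = (\<lambda>vu::'n expo \<times> 'n expo. (\<lambda>_::'n. m) + fst vu - snd vu)"
  have finS: "finite (op_supp P)" using dP by (simp add: is_diffop_def)
  have ub: "\<And>v u i. (v,u) \<in> op_supp P \<Longrightarrow> u i \<le> m"
    using u_bound[OF dP] m_def by blast
  have zero_eval: "mpoly_eval (\<lambda>a. delta_coeff P s a) y = 0" if "s \<notin> shift_set P" for s y
  proof -
    have "{a. delta_coeff P s a \<noteq> 0} = {}" using that by (auto simp: shift_set_def)
    then show ?thesis unfolding mpoly_eval_def by simp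
  qed
  show ?thesis
  proof (cases "op_supp P = {}")
    case True
    then show ?thesis by (simp add: indicial_def mpoly_eval_def)
  next
    case False
    note ne = False
    show ?thesis
    proof (cases "shift_set P = {}")
      case True
      then show ?thesis using zero_eval ne by (simp add: indicial_def)
    next
      case False
      have "shift_set P \<subseteq> sh ` op_supp P"
      proof
        fix s assume "s \<in> shift_set P"
        then obtain a where "delta_coeff P s a \<noteq> 0" by (auto simp: shift_set_def)
        then obtain vu where vu: "vu \<in> op_supp P" and nzt: "(case vu of (v,u) \<Rightarrow>
            if (\<lambda>_. op_order P) + v - u = s
            then P (v,u) * (\<Prod>i\<in>UNIV. of_int (s1 (u i) (a i)) :: 'k) else 0) \<noteq> 0"
          unfolding delta_coeff_def by (meson sum.not_neutral_contains_not_neutral)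
        then have "sh vu = s" by (cases vu) (auto simp: sh_def m_def split: if_splits)
        then show "s \<in> sh ` op_supp P" using vu by blast
      qed
      then have finT: "finite (shift_set P)" using finS by (meson finite_imageI finite_subset)
      obtain s0 where s0T: "s0 \<in> shift_set P" and s0min: "\<And>s. s \<in> shift_set P \<Longrightarrow> s \<noteq> s0 \<Longrightarrow> prec s0 s"
        and ind: "indicial prec P = delta_coeff P s0"
        using gto_the_min[OF gto gto_min[OF gto finT False]] ne unfolding indicial_def by auto
      have s0img: "s0 \<in> sh ` op_supp P" using s0T \<open>shift_set P \<subseteq> sh ` op_supp P\<close> by blast
      define c where "c = s0 + w"
      have evq: "\<And>s y. mpoly_eval (delta_coeff P s) (\<lambda>i. of_nat (y i)) =
          (\<Sum>vu\<in>op_supp P. if sh vu = s then P vu * (\<Prod>i\<in>UNIV. fall (y i) (snd vu i)) else (0::'k))"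
        unfolding eval_delta[OF dP] sh_def m_def
        by (intro sum.cong refl) auto
      show ?thesis
      proof (cases "\<forall>i. m \<le> c i")
        case False
        then obtain i where ci: "c i < m" by (auto simp: not_le)
        have "mpoly_eval (delta_coeff P s0) (\<lambda>i. of_nat (w i)) = 0"
          unfolding evq
        proof (intro sum.neutral ballI)
          fix vu assume vu: "vu \<in> op_supp P"
          obtain v u where vu_eq: "vu = (v,u)" by (cases vu)
          have "u i \<le> m" using ub vu vu_eq by blast
          show "(if sh vu = s0 then P vu * (\<Prod>i\<in>UNIV. fall (w i) (snd vu i)) else (0::'k)) = 0"
          proof (cases "sh vu = s0")
            case True
            then have "s0 i = m + v i - u i" by (auto simp: sh_def vu_eq)
            then have "w i < u i" using ci \<open>u i \<le> m\<close> by (simp add: c_def)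
            then have "fall (w i) (u i) = (0::'k)" by (rule fall_zero)
            then have "(\<Prod>i\<in>UNIV. fall (w i) (snd vu i)) = (0::'k)"
              by (simp add: vu_eq prod_zero_iff) blast
            then show ?thesis by simp
          qed simp
        qed
        then show ?thesis by (simp add: ind w_def)
      next
        case True
        note cm = True
        define a where "a = c - (\<lambda>_. m)"
        define h where "h = (\<lambda>s vu. if s \<le> c then f (c - s) * (P vu * (\<Prod>i\<in>UNIV. fall ((c - s) i) (snd vu i))) else (0::'k))"
        have tm: "P vu * (if fst vu \<le> a then deriv_coeff (snd vu) f (a - fst vu) else 0) = h (sh vu) vu"
          if vu: "vu \<in> op_supp P" for vu
        proof -
          obtain v u where vu_eq: "vu = (v,u)" by (cases vu)
          have um: "\<And>i. u i \<le> m" using ub vu vu_eq by blast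
          show ?thesis
          proof (cases "v \<le> a")
            case True
            then have vi: "\<And>i. v i \<le> a i" by (simp add: le_fun_def)
            have le: "sh vu \<le> c" unfolding le_fun_def
            proof
              fix i show "sh vu i \<le> c i" using vi[of i] um[of i] cm[rule_format, of i] by (simp add: sh_def vu_eq a_def)
            qed
            have eqb: "a - v + u = c - sh vu"
            proof
              fix i show "(a - v + u) i = (c - sh vu) i" using vi[of i] um[of i] cm[rule_format, of i]
                by (simp add: sh_def vu_eq a_def)
            qed
            have "deriv_coeff u f (a - v) = f (c - sh vu) * (\<Prod>i\<in>UNIV. fall ((c - sh vu) i) (u i))"
              unfolding deriv_coeff_def eqb[symmetric]
              by (simp add: fall_fact)
            then show ?thesis using True le by (simp add: h_def vu_eq)
          next
            case False
            then obtain i where vi: "a i < v i" by (auto simp: le_fun_def not_le)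
            have "h (sh vu) vu = 0"
            proof (cases "sh vu \<le> c")
              case True
              then have "sh vu i \<le> c i" by (simp add: le_fun_def)
              then have "(c - sh vu) i < u i" using vi um[of i] cm[rule_format, of i] by (simp add: sh_def vu_eq a_def)
              then have "fall ((c - sh vu) i) (u i) = (0::'k)" by (rule fall_zero)
              then have "(\<Prod>i\<in>UNIV. fall ((c - sh vu) i) (snd vu i)) = (0::'k)"
                by (simp add: vu_eq prod_zero_iff) blast
              then show ?thesis by (simp add: h_def)
            qed (simp add: h_def)
            then show ?thesis using False by (simp add: vu_eq)
          qed
        qed
        have "0 = apply_op P f a" using sol by simp
        also have "\<dots> = (\<Sum>vu\<in>op_supp P. h (sh vu) vu)"
          unfolding apply_op_def
          apply (rule sum.cong[OF refl])
          subgoal for vu using tm[of vu] by (simp add: split_beta)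
          done
        also have "\<dots> = (\<Sum>s\<in>sh ` op_supp P. \<Sum>vu\<in>{x \<in> op_supp P. sh x = s}. h (sh vu) vu)"
          by (rule sum.image_gen[OF finS])
        also have "\<dots> = (\<Sum>s\<in>sh ` op_supp P. if s \<le> c then f (c - s) *
             mpoly_eval (delta_coeff P s) (\<lambda>i. of_nat ((c - s) i)) else 0)"
        proof (intro sum.cong refl)
          fix s assume "s \<in> sh ` op_supp P"
          have "(\<Sum>vu\<in>{x \<in> op_supp P. sh x = s}. h (sh vu) vu) = (\<Sum>vu\<in>{x \<in> op_supp P. sh x = s}. h s vu)"
            by (intro sum.cong refl) auto
          also have "\<dots> = (\<Sum>vu\<in>op_supp P. if sh vu = s then h s vu else 0)"
            by (rule sum.inter_filter[OF finS])
          also have "\<dots> = (if s \<le> c then f (c - s) *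
             mpoly_eval (delta_coeff P s) (\<lambda>i. of_nat ((c - s) i)) else 0)"
            unfolding evq h_def by (cases "s \<le> c") (simp_all add: sum_distrib_left if_distrib cong: if_cong)
          finally show "(\<Sum>vu\<in>{x \<in> op_supp P. sh x = s}. h (sh vu) vu) = (if s \<le> c then f (c - s) *
             mpoly_eval (delta_coeff P s) (\<lambda>i. of_nat ((c - s) i)) else 0)" .
        qed
        also have "\<dots> = (\<Sum>s\<in>{s0}. if s \<le> c then f (c - s) *
             mpoly_eval (delta_coeff P s) (\<lambda>i. of_nat ((c - s) i)) else 0)"
        proof (rule sum.mono_neutral_right[OF finite_imageI[OF finS]], use s0img in simp, intro ballI)
          fix s assume "s \<in> sh ` op_supp P - {s0}"
          then have s: "s \<in> sh ` op_supp P" "s \<noteq> s0" by auto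
          show "(if s \<le> c then f (c - s) *
             mpoly_eval (delta_coeff P s) (\<lambda>i. of_nat ((c - s) i)) else 0) = 0"
          proof (cases "s \<le> c \<and> s \<in> shift_set P \<and> f (c - s) \<noteq> 0")
            case True
            define b where "b = c - s"
            have sb: "s + b = c" using True unfolding b_def
              by (auto simp: fun_eq_iff le_fun_def)
            have ps: "prec s0 s" using s0min True s by blast
            show ?thesis
            proof (cases "b = w")
              case True
              then have "s + w = s0 + w" using sb c_def by simp
              then have "s = s0" by simp
              then show ?thesis using s by simp
            next
              case False
              then have "prec w b" using wmin True b_def by blast
              then have "prec (w + s) (b + s)" by (rule mono)
              then have p1: "prec (s + w) c" using sb by (simp add: add.commute)
              have "prec (s0 + w) (s + w)" using ps by (rule mono)
              then have "prec c c" using p1 tr c_def by blast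
              then show ?thesis using irr by blast
            qed
          next
            case False
            then show ?thesis using zero_eval by auto
          qed
        qed
        also have "\<dots> = f w * mpoly_eval (delta_coeff P s0) (\<lambda>i. of_nat (w i))"
        proof -
          have "s0 \<le> c" by (simp add: c_def le_fun_def)
          moreover have "c - s0 = w" by (simp add: c_def fun_eq_iff)
          ultimately show ?thesis by simp
        qed
        finally have "f w * mpoly_eval (delta_coeff P s0) (\<lambda>i. of_nat (w i)) = 0" by simp
        then show ?thesis using fw by (simp add: ind w_def)
      qed
    qed
  qed
qed


theorem mainTheorem8:
  fixes prec :: "('n::finite) expo \<Rightarrow> 'n expo \<Rightarrow> bool"
    and G :: "('n, 'k::field_char_0) diffop set"
    and f :: "'n expo \<Rightarrow> 'k"
  assumes "graded_term_order prec"
    and "finite G"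
    and "\<forall>P\<in>G. is_diffop P"
    and "f \<noteq> (\<lambda>_. 0)"
    and "\<forall>P\<in>G. apply_op P f = (\<lambda>_. 0)"
  shows "\<forall>P\<in>G. mpoly_eval (indicial prec P) (\<lambda>i. of_nat (init_exp prec f i)) = 0"
  using assms main_one by blast

end
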